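(* Let $p$ be a prime, $q>2$ a power of $p$, and $F$ a field of characteristic $p$ containing $\mathbb{F}_q$ which is a regular extension of $\mathbb{F}_q$. Let $L\in F[x]$ be a $q$-polynomial of $q$-degree $2$ such that $L(x)/x$ is irreducible over $F$, let $E$ be the splitting field of $L$ over $F$, and suppose that the Galois group $G$ of $E$ over $F$, viewed as a subgroup of $GL(2,q)$ via its action on the 2-dimensional $\mathbb{F}_q$-space $V$ of roots of $L$, contains $SL(2,q)$. Let $v_1,v_2$ be an $\mathbb{F}_q$-basis of $V$. Then for every $r\geq1$ the evaluation map $\epsilon_r:H_{2,r}(\mathbb{F}_q)\to E$, $\epsilon_r(P)=P(v_1,v_2)$, is injective.
   Context: $F$ is a regular extension of $\mathbb{F}_q$ means that the only elements of $F$ algebraic over $\mathbb{F}_q$ are those of $\mathbb{F}_q$. $H_{2,r}(\mathbb{F}_q)$ is the space of homogeneous polynomials of degree $r$ in $\mathbb{F}_q[x_1,x_2]$ together with $0$. A $q$-polynomial of $q$-degree $2$ is $a_0x+a_1x^q+a_2x^{q^2}$ with $a_2\neq0$. *)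

theory Defs
  imports "HOL-Computational_Algebra.Polynomial"
begin

text \<open>All fields are realised as subsets of an ambient field of type 'a.\<close>

definition is_subfield :: "'a::field set \<Rightarrow> bool" where
  "is_subfield S \<longleftrightarrow> 0 \<in> S \<and> 1 \<in> S \<and>
     (\<forall>x\<in>S. \<forall>y\<in>S. x + y \<in> S \<and> x - y \<in> S \<and> x * y \<in> S) \<and>
     (\<forall>x\<in>S. x \<noteq> 0 \<longrightarrow> inverse x \<in> S)"

definition poly_over :: "'a::field set \<Rightarrow> 'a poly \<Rightarrow> bool" where
  "poly_over S p \<longleftrightarrow> (\<forall>i. coeff p i \<in> S)"

definition algebraic_over :: "'a::field set \<Rightarrow> 'a \<Rightarrow> bool" where
  "algebraic_over K x \<longleftrightarrow> (\<exists>p. p \<noteq> 0 \<and> poly_over K p \<and> poly p x = 0)"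

definition regular_ext :: "'a::field set \<Rightarrow> 'a set \<Rightarrow> bool" where
  "regular_ext K F \<longleftrightarrow> (\<forall>x\<in>F. algebraic_over K x \<longrightarrow> x \<in> K)"

definition irreducible_over :: "'a::field set \<Rightarrow> 'a poly \<Rightarrow> bool" where
  "irreducible_over F p \<longleftrightarrow> poly_over F p \<and> degree p \<ge> 1 \<and>
     (\<forall>a b. poly_over F a \<longrightarrow> poly_over F b \<longrightarrow> p = a * b \<longrightarrow> degree a = 0 \<or> degree b = 0)"

definition splits_in :: "'a::field set \<Rightarrow> 'a poly \<Rightarrow> bool" where
  "splits_in E p \<longleftrightarrow> (\<exists>c rs. set rs \<subseteq> E \<and> p = smult c (\<Prod>r\<leftarrow>rs. [:-r, 1:]))"

definition splitting_field :: "'a::field set \<Rightarrow> 'a poly \<Rightarrow> 'a set \<Rightarrow> bool" where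
  "splitting_field F p E \<longleftrightarrow> is_subfield E \<and> F \<subseteq> E \<and> splits_in E p \<and>
     E = \<Inter>{K. is_subfield K \<and> F \<union> {x. poly p x = 0} \<subseteq> K}"

definition gal :: "'a::field set \<Rightarrow> 'a set \<Rightarrow> ('a \<Rightarrow> 'a) set" where
  "gal E F = {\<sigma>. bij_betw \<sigma> E E \<and>
     (\<forall>x\<in>E. \<forall>y\<in>E. \<sigma> (x + y) = \<sigma> x + \<sigma> y \<and> \<sigma> (x * y) = \<sigma> x * \<sigma> y) \<and>
     (\<forall>x\<in>F. \<sigma> x = x)}"

definition qpoly2 :: "nat \<Rightarrow> 'a::field \<Rightarrow> 'a \<Rightarrow> 'a \<Rightarrow> 'a poly" where
  "qpoly2 q a0 a1 a2 = monom a0 1 + monom a1 q + monom a2 (q^2)"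

definition qpoly2_div_x :: "nat \<Rightarrow> 'a::field \<Rightarrow> 'a \<Rightarrow> 'a \<Rightarrow> 'a poly" where
  "qpoly2_div_x q a0 a1 a2 = monom a0 0 + monom a1 (q - 1) + monom a2 (q^2 - 1)"

definition is_basis2 :: "'a::field set \<Rightarrow> 'a set \<Rightarrow> 'a \<Rightarrow> 'a \<Rightarrow> bool" where
  "is_basis2 K V v1 v2 \<longleftrightarrow> v1 \<in> V \<and> v2 \<in> V \<and>
     V = {a * v1 + b * v2 | a b. a \<in> K \<and> b \<in> K} \<and>
     (\<forall>a\<in>K. \<forall>b\<in>K. a * v1 + b * v2 = 0 \<longrightarrow> a = 0 \<and> b = 0)"

definition eval_hom :: "nat \<Rightarrow> (nat \<Rightarrow> 'a::field) \<Rightarrow> 'a \<Rightarrow> 'a \<Rightarrow> 'a" where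
  "eval_hom r c v1 v2 = (\<Sum>i\<le>r. c i * v1 ^ i * v2 ^ (r - i))"

end

theory Submission
  imports Defs "HOL-Computational_Algebra.Computational_Algebra"
begin

lemma frob_add:
  assumes "prime CHAR('a::field)" "Q = CHAR('a) ^ n"
  shows "(x + y :: 'a) ^ Q = x ^ Q + y ^ Q"
  using freshmans_dream'[OF assms] .

lemma frob_pos:
  assumes "prime CHAR('a::field)" "Q = CHAR('a) ^ n"
  shows "Q > 0"
  using assms prime_gt_0_nat by auto

lemma frob_neg:
  assumes "prime CHAR('a::field)" "Q = CHAR('a) ^ n"
  shows "(- x :: 'a) ^ Q = - (x ^ Q)"
proof -
  have "(x + - x) ^ Q = x ^ Q + (- x) ^ Q" by (rule frob_add[OF assms])
  moreover have "(0::'a) ^ Q = 0" using frob_pos[OF assms] by simp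
  ultimately show ?thesis by (simp add: eq_neg_iff_add_eq_0 add.commute)
qed

lemma frob_diff:
  assumes "prime CHAR('a::field)" "Q = CHAR('a) ^ n"
  shows "(x - y :: 'a) ^ Q = x ^ Q - y ^ Q"
  using frob_add[OF assms, of x "-y"] frob_neg[OF assms, of y] by simp

lemma frob_inj:
  assumes "prime CHAR('a::field)" "Q = CHAR('a) ^ n" "(x::'a) ^ Q = y ^ Q"
  shows "x = y"
proof -
  have "(x - y) ^ Q = 0" using frob_diff[OF assms(1,2)] assms(3) by simp
  thus ?thesis by simp
qed

lemma map_frob_mult:
  assumes "prime CHAR('a::field)" "Q = CHAR('a) ^ n"
  shows "map_poly (\<lambda>x. x ^ Q) (a * b :: 'a poly) = map_poly (\<lambda>x. x ^ Q) a * map_poly (\<lambda>x. x ^ Q) b"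
proof (rule poly_eqI)
  fix i
  have Q0: "(0::'a) ^ Q = 0" using frob_pos[OF assms] by simp
  show "coeff (map_poly (\<lambda>x. x ^ Q) (a * b)) i = coeff (map_poly (\<lambda>x. x ^ Q) a * map_poly (\<lambda>x. x ^ Q) b) i"
    by (simp add: coeff_map_poly Q0 coeff_mult freshmans_dream_sum'[OF assms] power_mult_distrib)
qed

lemma map_frob_lin:
  assumes "prime CHAR('a::field)" "Q = CHAR('a) ^ n"
  shows "map_poly (\<lambda>x. x ^ Q) [:- a, 1 :: 'a:] = [:- (a ^ Q), 1:]"
  using frob_pos[OF assms] frob_neg[OF assms] by (simp add: map_poly_pCons)

lemma map_frob_prod:
  fixes m :: nat
  assumes "prime CHAR('a::field)" "Q = CHAR('a) ^ n"
  shows "map_poly (\<lambda>x. x ^ Q) (\<Prod>k<m. [:- f k, 1 :: 'a:]) = (\<Prod>k<m. [:- (f k ^ Q), 1:])"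
proof (induction m)
  case 0 then show ?case by simp
next
  case (Suc m) then show ?case by (simp only: prod.lessThan_Suc map_frob_mult[OF assms] map_frob_lin[OF assms])
qed

lemma orbit_coeff_fixed:
  assumes "prime CHAR('a::field)" "Q = CHAR('a) ^ n" "m > 0" "(t::'a) ^ (Q ^ m) = t"
  shows "coeff (\<Prod>k<m. [:- (t ^ (Q ^ k)), 1:]) i ^ Q = coeff (\<Prod>k<m. [:- (t ^ (Q ^ k)), 1:]) i"
proof -
  define f where "f = (\<lambda>k. [:- (t ^ (Q ^ k)), 1 :: 'a:])"
  obtain m' where m': "m = Suc m'" using assms(3) by (cases m) auto
  have "map_poly (\<lambda>x. x ^ Q) (\<Prod>k<m. [:- (t ^ (Q ^ k)), 1:]) = (\<Prod>k<m. [:- ((t ^ (Q ^ k)) ^ Q), 1:])"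
    by (rule map_frob_prod[OF assms(1,2)])
  also have "\<dots> = (\<Prod>k<m. f (Suc k))"
    by (simp add: f_def flip: power_mult) (simp add: mult.commute)
  also have "\<dots> = (\<Prod>k<m'. f (Suc k)) * f (Suc m')" using m' by simp
  also have "f (Suc m') = f 0" using assms(4) m' by (simp add: f_def)
  also have "(\<Prod>k<m'. f (Suc k)) * f 0 = (\<Prod>k<m. f k)"
    unfolding m' prod.lessThan_Suc_shift by (rule mult.commute)
  finally have "map_poly (\<lambda>x. x ^ Q) (\<Prod>k<m. f k) = (\<Prod>k<m. f k)" by (simp add: f_def)
  hence "coeff (map_poly (\<lambda>x. x ^ Q) (\<Prod>k<m. f k)) i = coeff (\<Prod>k<m. f k) i" by simp
  moreover have "(0::'a) ^ Q = 0" using frob_pos[OF assms(1,2)] by simp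
  ultimately show ?thesis by (simp add: coeff_map_poly f_def)
qed

lemma subfield_frob:
  assumes "is_subfield S" "card S = Q" "Q > 1" "(x::'a::field) \<in> S"
  shows "x ^ Q = x"
proof (cases "x = 0")
  case True then show ?thesis using assms by simp
next
  case False
  have fin: "finite S" using assms(2,3) card.infinite by fastforce
  define S' where "S' = S - {0}"
  have 0: "0 \<in> S" using assms(1) by (simp add: is_subfield_def)
  have cS': "card S' = Q - 1" using assms(2) 0 fin by (simp add: S'_def)
  have fin': "finite S'" using fin by (simp add: S'_def)
  have img: "(\<lambda>y. x * y) ` S' = S'"
  proof
    show "(\<lambda>y. x * y) ` S' \<subseteq> S'" using assms(1,4) False by (auto simp: S'_def is_subfield_def)
  next
    show "S' \<subseteq> (\<lambda>y. x * y) ` S'"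
    proof
      fix y assume y: "y \<in> S'"
      have ix: "inverse x \<in> S" using assms(1,4) False by (simp add: is_subfield_def)
      have "inverse x * y \<in> S'" using y ix assms(1) False by (auto simp: S'_def is_subfield_def)
      moreover have "y = x * (inverse x * y)" using False by simp
      ultimately show "y \<in> (\<lambda>y. x * y) ` S'" by blast
    qed
  qed
  have inj: "inj_on (\<lambda>y. x * y) S'" using False by (auto simp: inj_on_def)
  have "prod (\<lambda>y. y) S' = prod (\<lambda>y. y) ((\<lambda>y. x * y) ` S')" using img by simp
  also have "\<dots> = prod (\<lambda>y. x * y) S'" using prod.reindex[OF inj] by simp
  also have "\<dots> = x ^ card S' * prod (\<lambda>y. y) S'" by (simp add: prod.distrib)
  finally have "x ^ card S' = 1"
  proof -
    assume h: "prod (\<lambda>y. y) S' = x ^ card S' * prod (\<lambda>y. y) S'"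
    have "prod (\<lambda>y. y) S' \<noteq> 0" using fin' by (simp add: S'_def)
    with h show ?thesis by simp
  qed
  hence "x ^ (Q - 1) = 1" using cS' by simp
  hence "x * x ^ (Q - 1) = x" by simp
  thus ?thesis using assms(3) by (metis One_nat_def Suc_pred less_trans power_Suc zero_less_one)
qed

lemma frob_fixed_in_subfield:
  assumes "is_subfield S" "card S = Q" "Q > 1" "(x::'a::field) ^ Q = x"
  shows "x \<in> S"
proof (rule ccontr)
  assume nx: "x \<notin> S"
  have fin: "finite S" using assms(2,3) card.infinite by fastforce
  define P where "P = monom (1::'a) Q + [:0, -1:]"
  have Pev: "poly P y = y ^ Q - y" for y by (simp add: P_def poly_monom)
  have degP: "degree P = Q"
    unfolding P_def using assms(3) by (subst degree_add_eq_left) (auto simp: degree_monom_eq)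
  have P0: "P \<noteq> 0" using degP assms(3) by auto
  have "insert x S \<subseteq> {y. poly P y = 0}"
    using subfield_frob[OF assms(1,2,3)] assms(4) by (auto simp: Pev)
  hence "card (insert x S) \<le> card {y. poly P y = 0}"
    by (rule card_mono[OF poly_roots_finite[OF P0]])
  also have "\<dots> \<le> Q" using card_poly_roots_bound[OF P0] degP by simp
  finally show False using nx fin assms(2) by simp
qed

definition shom :: "'a::field set \<Rightarrow> ('a \<Rightarrow> 'a) \<Rightarrow> bool" where
  "shom E s \<longleftrightarrow> (\<forall>x\<in>E. \<forall>y\<in>E. s (x + y) = s x + s y \<and> s (x * y) = s x * s y) \<and> s 0 = 0 \<and> s 1 = 1"

lemma sf_neg: "is_subfield E \<Longrightarrow> x \<in> E \<Longrightarrow> - x \<in> E"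
  unfolding is_subfield_def by (metis diff_0)

lemma sf_inv: "is_subfield E \<Longrightarrow> x \<in> E \<Longrightarrow> inverse x \<in> E"
  unfolding is_subfield_def by (metis inverse_zero)

lemma sf_add: "is_subfield E \<Longrightarrow> x \<in> E \<Longrightarrow> y \<in> E \<Longrightarrow> x + y \<in> E"
  unfolding is_subfield_def by blast

lemma sf_mult: "is_subfield E \<Longrightarrow> x \<in> E \<Longrightarrow> y \<in> E \<Longrightarrow> x * y \<in> E"
  unfolding is_subfield_def by blast

lemma sf_pow: "is_subfield E \<Longrightarrow> x \<in> E \<Longrightarrow> x ^ n \<in> E"
  by (induction n) (auto simp: sf_mult, simp add: is_subfield_def)

lemma sf_sum: "is_subfield E \<Longrightarrow> (\<And>i. i \<in> A \<Longrightarrow> f i \<in> E) \<Longrightarrow> sum f A \<in> E"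
  by (induction A rule: infinite_finite_induct) (auto simp: sf_add, auto simp: is_subfield_def)

lemma sh_add: "shom E s \<Longrightarrow> x \<in> E \<Longrightarrow> y \<in> E \<Longrightarrow> s (x + y) = s x + s y"
  unfolding shom_def by blast

lemma sh_mult: "shom E s \<Longrightarrow> x \<in> E \<Longrightarrow> y \<in> E \<Longrightarrow> s (x * y) = s x * s y"
  unfolding shom_def by blast

lemma sh_neg: assumes "is_subfield E" "shom E s" "x \<in> E" shows "s (- x) = - s x"
proof -
  have "s (x + - x) = s x + s (- x)" using sh_add[OF assms(2,3) sf_neg[OF assms(1,3)]] .
  moreover have "s 0 = 0" using assms(2) by (simp add: shom_def)
  ultimately show ?thesis by (simp add: eq_neg_iff_add_eq_0 add.commute)
qed

lemma sh_inv: assumes "is_subfield E" "shom E s" "x \<in> E" shows "s (inverse x) = inverse (s x)"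
proof (cases "x = 0")
  case True then show ?thesis using assms(2) by (simp add: shom_def)
next
  case False
  have "s (x * inverse x) = s x * s (inverse x)" using sh_mult[OF assms(2,3) sf_inv[OF assms(1,3)]] .
  moreover have "s 1 = 1" using assms(2) by (simp add: shom_def)
  ultimately have "s x * s (inverse x) = 1" using False by simp
  thus ?thesis by (metis inverse_unique)
qed

lemma sh_pow: assumes "is_subfield E" "shom E s" "x \<in> E" shows "s (x ^ n) = s x ^ n"
  using assms by (induction n) (auto simp: shom_def sh_mult sf_pow)

lemma sh_sum: assumes "is_subfield E" "shom E s" "\<And>i. i \<in> A \<Longrightarrow> f i \<in> E"
  shows "s (sum f A) = (\<Sum>i\<in>A. s (f i))"
  using assms(3)
proof (induction A rule: infinite_finite_induct)
  case (insert x F)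
  have "f x \<in> E" "sum f F \<in> E" using insert.prems by (auto intro!: sf_sum[OF assms(1)])
  then show ?case using sh_add[OF assms(2), of "f x" "sum f F"] insert by auto
qed (use assms(2) in \<open>auto simp: shom_def\<close>)

lemma sh_poly: assumes "is_subfield E" "shom E s" "\<And>i. coeff p i \<in> E" "\<And>i. s (coeff p i) = coeff p i" "x \<in> E"
  shows "s (poly p x) = poly p (s x)"
proof -
  have "s (poly p x) = (\<Sum>i\<le>degree p. s (coeff p i * x ^ i))"
    unfolding poly_altdef using assms by (intro sh_sum) (auto intro: sf_mult sf_pow)
  also have "\<dots> = poly p (s x)"
    unfolding poly_altdef using assms by (intro sum.cong) (auto simp: sh_mult sh_pow sf_pow)
  finally show ?thesis .
qed

lemma orbit_lemma:
  assumes "prime CHAR('a::field)" "Q = CHAR('a) ^ n" "is_subfield Fq" "card Fq = Q" "Q > 1"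
    "is_subfield E" "Fq \<subseteq> E" "shom E s" "\<forall>x\<in>Fq. s x = x" "t \<in> E" "m > 0" "(t::'a) ^ (Q ^ m) = t"
  shows "\<exists>j. s t = t ^ (Q ^ j)"
proof -
  define h where "h = (\<Prod>k<m. [:- (t ^ (Q ^ k)), 1:])"
  have cF: "coeff h i \<in> Fq" for i
    unfolding h_def by (rule frob_fixed_in_subfield[OF assms(3,4,5)] orbit_coeff_fixed[OF assms(1,2,11,12)])+
  have ph: "poly h x = (\<Prod>k<m. x - t ^ (Q ^ k))" for x by (simp add: h_def poly_prod)
  have "poly h t = 0" unfolding ph by (rule prod_zero) (use assms(11) in \<open>auto intro!: bexI[of _ 0]\<close>)
  hence "s (poly h t) = 0" using assms(8) by (simp add: shom_def)
  moreover have "s (poly h t) = poly h (s t)"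
    using cF assms(7,9) by (intro sh_poly[OF assms(6,8)] assms(10)) auto
  ultimately have "(\<Prod>k<m. s t - t ^ (Q ^ k)) = 0" using ph by simp
  then obtain k where "s t - t ^ (Q ^ k) = 0" by auto
  thus ?thesis by auto
qed

lemma periodic_lemma:
  assumes "prime CHAR('a::field)" "Q = CHAR('a) ^ n" "P \<noteq> 0" "\<And>i. coeff P i ^ Q = coeff P i"
    "poly P (t::'a) = 0"
  shows "\<exists>m>0. t ^ (Q ^ m) = t"
proof -
  have step: "poly P (x ^ Q) = poly P x ^ Q" for x
  proof -
    have "poly P x ^ Q = (\<Sum>i\<le>degree P. (coeff P i * x ^ i) ^ Q)"
      unfolding poly_altdef by (rule freshmans_dream_sum'[OF assms(1,2)])
    also have "\<dots> = poly P (x ^ Q)"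
      unfolding poly_altdef using assms(4) by (simp add: power_mult_distrib flip: power_mult) (simp add: mult.commute)
    finally show ?thesis by simp
  qed
  have Q0: "Q > 0" by (rule frob_pos[OF assms(1,2)])
  have roots: "t ^ (Q ^ k) \<in> {x. poly P x = 0}" for k
  proof (induction k)
    case 0 then show ?case using assms(5) by simp
  next
    case (Suc k)
    have "t ^ (Q ^ Suc k) = (t ^ (Q ^ k)) ^ Q" by (metis power_Suc2 power_mult)
    then show ?case using Suc step Q0 by simp
  qed
  have "\<not> inj (\<lambda>k. t ^ (Q ^ k))"
  proof
    assume "inj (\<lambda>k. t ^ (Q ^ k))"
    hence "infinite (range (\<lambda>k. t ^ (Q ^ k)))" by (simp add: finite_image_iff)
    moreover have "range (\<lambda>k. t ^ (Q ^ k)) \<subseteq> {x. poly P x = 0}" using roots by auto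
    ultimately show False using poly_roots_finite[OF assms(3)] finite_subset by blast
  qed
  then obtain k l where kl: "t ^ (Q ^ k) = t ^ (Q ^ l)" "k \<noteq> l" unfolding inj_def by blast
  have "\<exists>k l. k < l \<and> t ^ (Q ^ k) = t ^ (Q ^ l)"
    using kl by (metis linorder_neqE_nat)
  then obtain k l where kl: "k < l" "t ^ (Q ^ k) = t ^ (Q ^ l)" by blast
  have Qk: "Q ^ k = CHAR('a) ^ (n * k)" using assms(2) by (simp add: power_mult)
  have "t ^ (Q ^ l) = (t ^ (Q ^ (l - k))) ^ (Q ^ k)"
    using kl(1) by (simp flip: power_mult power_add add: mult.commute)
  hence "t ^ (Q ^ k) = (t ^ (Q ^ (l - k))) ^ (Q ^ k)" using kl by simp
  hence "t = t ^ (Q ^ (l - k))" by (rule frob_inj[OF assms(1) Qk])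
  thus ?thesis using kl(1) by (intro exI[of _ "l - k"]) auto
qed

lemma key_alg:
  assumes "(t::'a::field) \<noteq> 0" "t + c \<noteq> 0" "c \<noteq> 0" "- inverse (t + c) = - inverse t + c"
  shows "t * t + c * t - 1 = 0"
proof -
  have "- t = - (t + c) + c * t * (t + c)"
    using assms(4) assms(1,2) by (simp add: field_simps)
  hence "c * (t * t + c * t - 1) = 0" by (simp add: algebra_simps)
  thus ?thesis using assms(3) by simp
qed

theorem theorem7p11:
  fixes p q :: nat and Fq F E :: "'a::field set" and a0 a1 a2 v1 v2 :: 'a
  assumes "prime p" and "\<exists>n>0. q = p ^ n" and "q > 2"
    and "CHAR('a) = p"
    and "is_subfield Fq" and "card Fq = q"
    and "is_subfield F" and "Fq \<subseteq> F" and "regular_ext Fq F"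
    and "a0 \<in> F" and "a1 \<in> F" and "a2 \<in> F" and "a2 \<noteq> 0"
    and "irreducible_over F (qpoly2_div_x q a0 a1 a2)"
    and "splitting_field F (qpoly2 q a0 a1 a2) E"
    and "is_basis2 Fq {x. poly (qpoly2 q a0 a1 a2) x = 0} v1 v2"
    and "\<forall>a\<in>Fq. \<forall>b\<in>Fq. \<forall>c\<in>Fq. \<forall>d\<in>Fq. a * d - b * c = 1 \<longrightarrow>
           (\<exists>\<sigma>\<in>gal E F. \<sigma> v1 = a * v1 + c * v2 \<and> \<sigma> v2 = b * v1 + d * v2)"
    and "r \<ge> 1"
  shows "\<forall>c c'. (\<forall>i\<le>r. c i \<in> Fq) \<longrightarrow> (\<forall>i\<le>r. c' i \<in> Fq) \<longrightarrow>
           eval_hom r c v1 v2 = eval_hom r c' v1 v2 \<longrightarrow> (\<forall>i\<le>r. c i = c' i)"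
proof (rule allI, rule allI, rule impI, rule impI, rule impI)
  fix c c' :: "nat \<Rightarrow> 'a"
  assume cF: "\<forall>i\<le>r. c i \<in> Fq" and c'F: "\<forall>i\<le>r. c' i \<in> Fq"
    and ev: "eval_hom r c v1 v2 = eval_hom r c' v1 v2"
  obtain n0 where n0: "n0 > 0" "q = p ^ n0" using assms(2) by blast
  have pc: "prime CHAR('a)" using assms(1,4) by simp
  have qc: "q = CHAR('a) ^ n0" using n0 assms(4) by simp
  have q1: "q > 1" using assms(3) by simp
  note Fqs = assms(5)
  have Fq01: "0 \<in> Fq" "1 \<in> Fq" using Fqs by (auto simp: is_subfield_def)
  define V where "V = {x. poly (qpoly2 q a0 a1 a2) x = 0}"
  have b: "v1 \<in> V" "v2 \<in> V" "\<forall>a\<in>Fq. \<forall>b\<in>Fq. a * v1 + b * v2 = 0 \<longrightarrow> a = 0 \<and> b = 0"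
    using assms(16) by (auto simp: V_def is_basis2_def)
  have v1: "v1 \<noteq> 0" using b(3) Fq01 by force
  have v2: "v2 \<noteq> 0" using b(3) Fq01 by force
  have Es: "is_subfield E" and FE: "F \<subseteq> E"
    and Edef: "E = \<Inter>{K. is_subfield K \<and> F \<union> V \<subseteq> K}"
    using assms(15) by (auto simp: splitting_field_def V_def)
  have VE: "V \<subseteq> E" using Edef by blast
  have FqE: "Fq \<subseteq> E" using FE assms(8) by blast
  define t where "t = v1 * inverse v2"
  have tE: "t \<in> E" unfolding t_def using b VE by (intro sf_mult[OF Es] sf_inv[OF Es]) auto
  have t0: "t \<noteq> 0" using v1 v2 by (simp add: t_def)
  have v1t: "v1 = t * v2" using v2 by (simp add: t_def)
  have tc: "t + x \<noteq> 0" if "x \<in> Fq" for x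
  proof
    assume tx: "t + x = 0"
    have "1 * v1 + x * v2 = (t + x) * v2" by (simp add: v1t algebra_simps)
    hence "1 * v1 + x * v2 = 0" using tx by simp
    thus False using b(3) that Fq01 by auto
  qed
  have galh: "shom E s" "\<forall>x\<in>Fq. s x = x" if "s \<in> gal E F" for s
    using that Fq01 assms(8) FE Fq01 unfolding gal_def shom_def
    by (auto simp: subset_eq)
  show "\<forall>i\<le>r. c i = c' i"
  proof (rule ccontr)
    assume "\<not> (\<forall>i\<le>r. c i = c' i)"
    then obtain k where k: "k \<le> r" "c k \<noteq> c' k" by blast
    define d where "d i = c i - c' i" for i
    have dF: "d i \<in> Fq" if "i \<le> r" for i
      using cF c'F that Fqs by (auto simp: d_def is_subfield_def)
    define P where "P = (\<Sum>i\<le>r. monom (d i) i)"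
    have cP: "coeff P i = (if i \<le> r then d i else 0)" for i
      by (simp add: P_def coeff_sum)
    have P0: "P \<noteq> 0"
    proof
      assume "P = 0"
      hence "coeff P k = 0" by simp
      thus False using k cP by (simp add: d_def)
    qed
    have cPq: "coeff P i ^ q = coeff P i" for i
      using subfield_frob[OF Fqs assms(6) q1] dF q1 by (simp add: cP)
    have "0 = eval_hom r c v1 v2 - eval_hom r c' v1 v2" using ev by simp
    also have "\<dots> = (\<Sum>i\<le>r. d i * v1 ^ i * v2 ^ (r - i))"
      by (simp add: eval_hom_def d_def algebra_simps flip: sum_subtractf)
    also have "\<dots> = (\<Sum>i\<le>r. d i * t ^ i * v2 ^ r)"
    proof (rule sum.cong)
      fix i assume "i \<in> {..r}"
      hence "v2 ^ i * v2 ^ (r - i) = v2 ^ r" by (simp flip: power_add)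
      thus "d i * v1 ^ i * v2 ^ (r - i) = d i * t ^ i * v2 ^ r"
        by (simp add: v1t power_mult_distrib mult.assoc)
    qed simp
    also have "\<dots> = poly P t * v2 ^ r"
      by (simp add: P_def poly_sum poly_monom sum_distrib_right)
    finally have "poly P t = 0" using v2 by simp
    then obtain m where m: "m > 0" "t ^ (q ^ m) = t"
      using periodic_lemma[OF pc qc P0 cPq] by blast
    have orb: "\<exists>j. s t = t ^ (q ^ j)" if "s \<in> gal E F" for s
      by (rule orbit_lemma[OF pc qc Fqs assms(6) q1 Es FqE galh[OF that] tE m])
    have m1: "-1 \<in> Fq" using sf_neg[OF Fqs Fq01(2)] .
    obtain s2 where s2: "s2 \<in> gal E F" "s2 v1 = 0 * v1 + (-1) * v2" "s2 v2 = 1 * v1 + 0 * v2"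
      using assms(17) Fq01 m1 by fastforce
    have s2t: "s2 t = - inverse t"
    proof -
      have "s2 t = s2 v1 * inverse (s2 v2)"
        unfolding t_def using galh[OF s2(1)] b VE
        by (simp add: sh_mult[OF _ _ sf_inv[OF Es]] sh_inv[OF Es] subset_eq)
      thus ?thesis using s2 v1 v2 by (simp add: t_def field_simps)
    qed
    have eq: "t * t + x * t - 1 = 0" if x: "x \<in> Fq" "x \<noteq> 0" for x
    proof -
      obtain s1 where s1: "s1 \<in> gal E F" "s1 v1 = 1 * v1 + x * v2" "s1 v2 = 0 * v1 + 1 * v2"
        using assms(17) Fq01 x by fastforce
      have s1t: "s1 t = t + x"
      proof -
        have "s1 t = s1 v1 * inverse (s1 v2)"
          unfolding t_def using galh[OF s1(1)] b VE
          by (simp add: sh_mult[OF _ _ sf_inv[OF Es]] sh_inv[OF Es] subset_eq)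
        thus ?thesis using s1 v1 v2 by (simp add: t_def field_simps)
      qed
      obtain j1 where j1: "s1 t = t ^ (q ^ j1)" using orb[OF s1(1)] by blast
      obtain j2 where j2: "s2 t = t ^ (q ^ j2)" using orb[OF s2(1)] by blast
      have h1: "shom E s1" "\<forall>x\<in>Fq. s1 x = x" using galh[OF s1(1)] by auto
      have h2: "shom E s2" "\<forall>x\<in>Fq. s2 x = x" using galh[OF s2(1)] by auto
      have xE: "x \<in> E" using x FqE by blast
      have "s1 (s2 t) = s1 (t ^ (q ^ j2))" using j2 by simp
      also have "\<dots> = t ^ (q ^ j1 * q ^ j2)" using sh_pow[OF Es h1(1) tE] j1 by (simp add: power_mult)
      also have "\<dots> = (t ^ (q ^ j2)) ^ (q ^ j1)" by (metis power_mult mult.commute)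
      also have "\<dots> = s2 (t ^ (q ^ j1))" using sh_pow[OF Es h2(1) tE] j2 by simp
      also have "\<dots> = s2 (s1 t)" using j1 by simp
      finally have comm: "s1 (s2 t) = s2 (s1 t)" .
      have "s1 (s2 t) = - inverse (t + x)"
        using s2t s1t sh_neg[OF Es h1(1) sf_inv[OF Es tE]] sh_inv[OF Es h1(1) tE] by simp
      moreover have "s2 (s1 t) = - inverse t + x"
        using s1t s2t sh_add[OF h2(1) tE xE] h2(2) x by simp
      ultimately have "- inverse (t + x) = - inverse t + x" using comm by simp
      thus ?thesis by (rule key_alg[OF t0 tc[OF x(1)] x(2)])
    qed
    have "\<not> Fq \<subseteq> {0, 1}"
    proof
      assume "Fq \<subseteq> {0, 1}"
      hence "card Fq \<le> card {0, 1::'a}" by (intro card_mono) auto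
      also have "\<dots> \<le> 2" by (simp add: card_insert_if)
      finally show False using assms(3,6) by simp
    qed
    then obtain x where x: "x \<in> Fq" "x \<noteq> 0" "x \<noteq> 1" by blast
    have "t * t + x * t - 1 = 0" using eq x by simp
    moreover have "t * t + 1 * t - 1 = 0" using eq[of 1] Fq01 by simp
    ultimately have "(x - 1) * t = 0" by (metis (no_types, lifting) add_diff_cancel_left' diff_self left_diff_distrib' mult_1 diff_diff_eq2 add.commute)
    thus False using x t0 by simp
  qed
qed

end
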